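(* Let $G$ and $H$ be connected graphs. If $H$ is an immersion of $G$, then $L(H)$ is a minor of $L(G)$.
   Context: All graphs are finite and loopless but may have parallel edges. For a graph $H$, the line graph $L(H)$ is the simple graph with vertex set $E(H)$ in which two distinct edges of $H$ are adjacent if and only if they share an end. Lifting a pair of adjacent edges $uv,vw$ means deleting them and adding a new edge $uw$ (if $u=w$ the loop is deleted). $H$ is an immersion of $G$ if a graph isomorphic to $H$ can be obtained from a subgraph of $G$ by repeatedly lifting pairs of edges. A graph $J$ is a minor of $G$ if a graph isomorphic to $J$ can be obtained from a subgraph of $G$ by contracting edges. *)

theory Defs
  imports Main
begin

text \<open>A multigraph has a vertex set, an edge set (edges have identities, so
parallel edges are allowed) and an incidence map giving the set of ends of
each edge.\<close>

record ('v, 'e) mgraph =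
  verts :: "'v set"
  edges :: "'e set"
  ends  :: "'e \<Rightarrow> 'v set"

definition mgraph :: "('v, 'e) mgraph \<Rightarrow> bool" where
  "mgraph G \<longleftrightarrow> finite (verts G) \<and> finite (edges G) \<and>
     (\<forall>e\<in>edges G. ends G e \<subseteq> verts G \<and> card (ends G e) = 2)"

definition madj :: "('v, 'e) mgraph \<Rightarrow> 'v \<Rightarrow> 'v \<Rightarrow> bool" where
  "madj G x y \<longleftrightarrow> (\<exists>e\<in>edges G. ends G e = {x, y})"

definition mconnected :: "('v, 'e) mgraph \<Rightarrow> bool" where
  "mconnected G \<longleftrightarrow> verts G \<noteq> {} \<and>
     (\<forall>x\<in>verts G. \<forall>y\<in>verts G. (madj G)\<^sup>*\<^sup>* x y)"

definition msubgraph :: "('v, 'e) mgraph \<Rightarrow> ('v, 'e) mgraph \<Rightarrow> bool" where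
  "msubgraph S G \<longleftrightarrow> verts S \<subseteq> verts G \<and> edges S \<subseteq> edges G \<and>
     (\<forall>e\<in>edges S. ends S e = ends G e \<and> ends G e \<subseteq> verts S)"

text \<open>The new edge reuses the name e1; this is
harmless since immersion is only defined up to isomorphism.\<close>

definition lift_step :: "('v, 'e) mgraph \<Rightarrow> ('v, 'e) mgraph \<Rightarrow> bool" where
  "lift_step G G' \<longleftrightarrow> (\<exists>e1 e2 u v w.
     e1 \<in> edges G \<and> e2 \<in> edges G \<and> e1 \<noteq> e2 \<and>
     ends G e1 = {u, v} \<and> ends G e2 = {v, w} \<and> u \<noteq> v \<and> v \<noteq> w \<and>
     (if u = w
      then G' = G\<lparr>edges := edges G - {e1, e2}\<rparr>
      else G' = G\<lparr>edges := edges G - {e2}, ends := (ends G)(e1 := {u, w})\<rparr>))"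

definition miso :: "('v, 'e) mgraph \<Rightarrow> ('w, 'f) mgraph \<Rightarrow> bool" where
  "miso H G \<longleftrightarrow> (\<exists>f g. bij_betw f (verts H) (verts G) \<and> bij_betw g (edges H) (edges G) \<and>
     (\<forall>e\<in>edges H. ends G (g e) = f ` ends H e))"

definition immersion :: "('w, 'f) mgraph \<Rightarrow> ('v, 'e) mgraph \<Rightarrow> bool" where
  "immersion H G \<longleftrightarrow> (\<exists>S G'. msubgraph S G \<and> lift_step\<^sup>*\<^sup>* S G' \<and> miso H G')"

record 'v sgraph =
  sverts :: "'v set"
  sedges :: "'v set set"

definition line_graph :: "('v, 'e) mgraph \<Rightarrow> 'e sgraph" where
  "line_graph H = \<lparr>sverts = edges H,
     sedges = {{e, f} | e f. e \<in> edges H \<and> f \<in> edges H \<and> e \<noteq> f \<and>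
                             ends H e \<inter> ends H f \<noteq> {}}\<rparr>"

definition ssubgraph :: "'v sgraph \<Rightarrow> 'v sgraph \<Rightarrow> bool" where
  "ssubgraph S G \<longleftrightarrow> sverts S \<subseteq> sverts G \<and> sedges S \<subseteq> sedges G \<and>
     (\<forall>e\<in>sedges S. e \<subseteq> sverts S)"

definition contract_step :: "'v sgraph \<Rightarrow> 'v sgraph \<Rightarrow> bool" where
  "contract_step G G' \<longleftrightarrow> (\<exists>u v. u \<noteq> v \<and> {u, v} \<in> sedges G \<and>
     G' = \<lparr>sverts = sverts G - {v},
           sedges = {e'. \<exists>e\<in>sedges G. e' = (\<lambda>x. if x = v then u else x) ` e \<and> card e' = 2}\<rparr>)"

definition siso :: "'v sgraph \<Rightarrow> 'w sgraph \<Rightarrow> bool" where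
  "siso J G \<longleftrightarrow> (\<exists>f. bij_betw f (sverts J) (sverts G) \<and>
     (\<forall>x\<in>sverts J. \<forall>y\<in>sverts J. {x, y} \<in> sedges J \<longleftrightarrow> {f x, f y} \<in> sedges G))"

definition minor :: "'w sgraph \<Rightarrow> 'v sgraph \<Rightarrow> bool" where
  "minor J G \<longleftrightarrow> (\<exists>S G'. ssubgraph S G \<and> contract_step\<^sup>*\<^sup>* S G' \<and> siso J G')"

end

theory Submission
  imports Defs
begin

definition quot :: "('v \<Rightarrow> 'v) \<Rightarrow> 'v sgraph \<Rightarrow> 'v sgraph" where
  "quot \<phi> S = \<lparr>sverts = \<phi> ` sverts S,
     sedges = {e'. \<exists>e\<in>sedges S. e' = \<phi> ` e \<and> card e' = 2}\<rparr>"

lemma model_contract_aux: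
  assumes "card {x\<in>sverts S. \<phi> x \<noteq> x} = n"
    and "finite (sverts S)"
    and "\<forall>e\<in>sedges S. e \<subseteq> sverts S \<and> card e = 2"
    and "\<forall>x\<in>sverts S. \<phi> x \<in> sverts S \<and> \<phi> (\<phi> x) = \<phi> x"
    and "\<forall>x\<in>sverts S. (\<lambda>a b. {a,b} \<in> sedges S \<and> \<phi> a = \<phi> b)\<^sup>*\<^sup>* x (\<phi> x)"
  shows "contract_step\<^sup>*\<^sup>* S (quot \<phi> S)"
  using assms
proof (induction n arbitrary: S rule: less_induct)
  case (less n S)
  let ?V = "sverts S" and ?E = "sedges S"
  show ?case
  proof (cases "\<exists>x\<in>?V. \<phi> x \<noteq> x")
    case False
    have fx: "\<forall>e\<in>?E. \<phi> ` e = e"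
    proof
      fix e assume "e \<in> ?E"
      with less.prems(3) have "e \<subseteq> ?V" by blast
      with False show "\<phi> ` e = e" by (force simp: image_iff)
    qed
    have "\<phi> ` ?V = ?V" using False by force
    moreover have "{e'. \<exists>e\<in>?E. e' = \<phi> ` e \<and> card e' = 2} = ?E"
      using fx less.prems(3) by force
    ultimately have "quot \<phi> S = S" unfolding quot_def by (cases S) simp
    then show ?thesis by simp
  next
    case True
    then obtain v where v: "v \<in> ?V" "\<phi> v \<noteq> v" by blast
    let ?R = "\<lambda>a b. {a,b} \<in> ?E \<and> \<phi> a = \<phi> b"
    from less.prems(5) v(1) have "?R\<^sup>*\<^sup>* v (\<phi> v)" by blast
    then obtain u where vu: "{v,u} \<in> ?E" "\<phi> v = \<phi> u"
      using v(2) by (cases rule: converse_rtranclpE) auto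
    have "card {v,u} = 2" using vu less.prems(3) by blast
    then have uv: "u \<noteq> v" by auto
    have u: "u \<in> ?V" using vu less.prems(3) by blast
    define \<sigma> where "\<sigma> = (\<lambda>z. if z = v then u else z)"
    define S' where "S' = \<lparr>sverts = ?V - {v}, sedges = {e'. \<exists>e\<in>?E. e' = \<sigma> ` e \<and> card e' = 2}\<rparr>"
    have step: "contract_step S S'"
      unfolding contract_step_def S'_def \<sigma>_def
      using uv vu(1) by (intro exI[of _ u] exI[of _ v]) (auto simp: insert_commute)
    have \<phi>\<sigma>: "\<phi> (\<sigma> z) = \<phi> z" for z using vu(2) by (simp add: \<sigma>_def)
    have img: "\<phi> ` (\<sigma> ` e) = \<phi> ` e" for e using \<phi>\<sigma> by (simp add: image_image)
    have quot_eq: "quot \<phi> S' = quot \<phi> S"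
    proof -
      have "\<phi> ` (?V - {v}) = \<phi> ` ?V" using u uv vu(2) by (auto simp: image_iff)
      moreover have "{e'. \<exists>e\<in>sedges S'. e' = \<phi> ` e \<and> card e' = 2} = {e'. \<exists>e\<in>?E. e' = \<phi> ` e \<and> card e' = 2}"
      proof (intro set_eqI iffI)
        fix e' assume "e' \<in> {e'. \<exists>e\<in>sedges S'. e' = \<phi> ` e \<and> card e' = 2}"
        then obtain e where "e \<in> ?E" "e' = \<phi> ` (\<sigma> ` e)" "card e' = 2" by (auto simp: S'_def)
        then show "e' \<in> {e'. \<exists>e\<in>?E. e' = \<phi> ` e \<and> card e' = 2}" using img by auto
      next
        fix e' assume "e' \<in> {e'. \<exists>e\<in>?E. e' = \<phi> ` e \<and> card e' = 2}"
        then obtain e where e: "e \<in> ?E" "e' = \<phi> ` e" "card e' = 2" by auto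
        have ce: "card e = 2" using e(1) less.prems(3) by blast
        then have fe: "finite e" using card.infinite by fastforce
        have "card (\<phi> ` (\<sigma> ` e)) \<le> card (\<sigma> ` e)" by (rule card_image_le) (use fe in simp)
        moreover have "card (\<sigma> ` e) \<le> card e" using fe card_image_le by blast
        ultimately have "card (\<sigma> ` e) = 2" using e ce img by simp
        then have "\<sigma> ` e \<in> sedges S'" using e(1) unfolding S'_def by simp blast
        then show "e' \<in> {e'. \<exists>e\<in>sedges S'. e' = \<phi> ` e \<and> card e' = 2}"
          using e(2,3) img[of e] by (metis (mono_tags, lifting) mem_Collect_eq)
      qed
      ultimately show ?thesis unfolding quot_def S'_def by simp
    qed
    have c1: "card {x \<in> sverts S'. \<phi> x \<noteq> x} < n"
    proof -
      have "{x \<in> sverts S'. \<phi> x \<noteq> x} = {x\<in>?V. \<phi> x \<noteq> x} - {v}" by (auto simp: S'_def)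
      moreover have "finite {x\<in>?V. \<phi> x \<noteq> x}" using less.prems(2) by simp
      moreover have "v \<in> {x\<in>?V. \<phi> x \<noteq> x}" using v by simp
      ultimately show ?thesis using less.prems(1) card_Diff1_less[of "{x\<in>?V. \<phi> x \<noteq> x}" v] by simp
    qed
    have c2: "finite (sverts S')" using less.prems(2) by (simp add: S'_def)
    have c3: "\<forall>e\<in>sedges S'. e \<subseteq> sverts S' \<and> card e = 2"
      using less.prems(3) u uv by (auto simp: S'_def \<sigma>_def)
    have c4: "\<forall>x\<in>sverts S'. \<phi> x \<in> sverts S' \<and> \<phi> (\<phi> x) = \<phi> x"
    proof
      fix x assume x: "x \<in> sverts S'"
      then have xv: "x \<in> ?V" by (simp add: S'_def)
      have "\<phi> x \<noteq> v"
      proof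
        assume "\<phi> x = v"
        then have "\<phi> v = v" using less.prems(4) xv by metis
        then show False using v by simp
      qed
      then show "\<phi> x \<in> sverts S' \<and> \<phi> (\<phi> x) = \<phi> x" using less.prems(4) xv by (simp add: S'_def)
    qed
    have c5: "\<forall>x\<in>sverts S'. (\<lambda>a b. {a,b} \<in> sedges S' \<and> \<phi> a = \<phi> b)\<^sup>*\<^sup>* x (\<phi> x)"
    proof
      fix x assume x: "x \<in> sverts S'"
      then have xv: "x \<in> ?V" "x \<noteq> v" by (auto simp: S'_def)
      have "(\<lambda>a b. {a,b} \<in> sedges S' \<and> \<phi> a = \<phi> b)\<^sup>*\<^sup>* (\<sigma> a) (\<sigma> b)" if "?R\<^sup>*\<^sup>* a b" for a b
        using that
      proof (induction rule: rtranclp_induct)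
        case base then show ?case by simp
      next
        case (step b c)
        show ?case
        proof (cases "\<sigma> b = \<sigma> c")
          case True then show ?thesis using step.IH by simp
        next
          case False
          have "\<exists>e\<in>sedges S. {\<sigma> b, \<sigma> c} = \<sigma> ` e" using step.hyps(2) by (intro bexI[of _ "{b,c}"]) auto
          moreover have "card {\<sigma> b, \<sigma> c} = 2" using False by simp
          ultimately have "{\<sigma> b, \<sigma> c} \<in> sedges S'" using step.hyps(2) unfolding S'_def by auto
          moreover have "\<phi> (\<sigma> b) = \<phi> (\<sigma> c)" using step.hyps(2) \<phi>\<sigma> by simp
          ultimately show ?thesis using step.IH by (simp add: rtranclp.rtrancl_into_rtrancl)
        qed
      qed
      moreover have "?R\<^sup>*\<^sup>* x (\<phi> x)" using less.prems(5) xv by blast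
      moreover have "\<phi> x \<noteq> v" using c4 x by (auto simp: S'_def)
      ultimately show "(\<lambda>a b. {a,b} \<in> sedges S' \<and> \<phi> a = \<phi> b)\<^sup>*\<^sup>* x (\<phi> x)"
        using xv by (fastforce simp: \<sigma>_def)
    qed
    have "contract_step\<^sup>*\<^sup>* S' (quot \<phi> S')"
      using less.IH[OF c1 refl c2 c3 c4 c5] .
    then show ?thesis using step quot_eq by (simp add: converse_rtranclp_into_rtranclp)
  qed
qed


definition ladj :: "('v,'e) mgraph \<Rightarrow> 'e set \<Rightarrow> 'e \<Rightarrow> 'e \<Rightarrow> bool" where
  "ladj G B a b \<longleftrightarrow> a \<in> B \<and> b \<in> B \<and> a \<noteq> b \<and> ends G a \<inter> ends G b \<noteq> {}"

definition conn :: "('v,'e) mgraph \<Rightarrow> 'e set \<Rightarrow> bool" where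
  "conn G B \<longleftrightarrow> (\<forall>x\<in>B. \<forall>y\<in>B. (ladj G B)\<^sup>*\<^sup>* x y)"

definition Inv :: "('v,'e) mgraph \<Rightarrow> ('v,'f) mgraph \<Rightarrow> ('f \<Rightarrow> 'e set) \<Rightarrow> bool" where
  "Inv G T B \<longleftrightarrow> (\<forall>t\<in>edges T. B t \<subseteq> edges G \<and> B t \<noteq> {} \<and> conn G (B t) \<and>
        (\<forall>a\<in>ends T t. \<exists>e\<in>B t. a \<in> ends G e)) \<and>
     (\<forall>t\<in>edges T. \<forall>t'\<in>edges T. t \<noteq> t' \<longrightarrow> B t \<inter> B t' = {})"

lemma ladj_mono:
  assumes "(ladj G B1)\<^sup>*\<^sup>* x y" "B1 \<subseteq> B2"
  shows "(ladj G B2)\<^sup>*\<^sup>* x y"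
  using assms(1)
proof (induction rule: rtranclp_induct)
  case base then show ?case by simp
next
  case (step y z)
  then have "ladj G B2 y z" using assms(2) by (auto simp: ladj_def)
  then show ?case using step.IH by (rule rtranclp.rtrancl_into_rtrancl[rotated])
qed

lemma conn_union:
  assumes c1: "conn G B1" and c2: "conn G B2" and a: "a1 \<in> B1" "a2 \<in> B2" "a1 \<noteq> a2"
    "ends G a1 \<inter> ends G a2 \<noteq> {}"
  shows "conn G (B1 \<union> B2)"
proof -
  let ?r = "ladj G (B1 \<union> B2)"
  have m1: "?r\<^sup>*\<^sup>* x y" if "x \<in> B1" "y \<in> B1" for x y
    using c1 that unfolding conn_def by (blast intro: ladj_mono)
  have m2: "?r\<^sup>*\<^sup>* x y" if "x \<in> B2" "y \<in> B2" for x y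
    using c2 that unfolding conn_def by (blast intro: ladj_mono)
  have e12: "?r a1 a2" and e21: "?r a2 a1" using a by (auto simp: ladj_def)
  show ?thesis unfolding conn_def
  proof (intro ballI)
    fix x y assume x: "x \<in> B1 \<union> B2" and y: "y \<in> B1 \<union> B2"
    show "?r\<^sup>*\<^sup>* x y"
    proof (cases "x \<in> B1")
      case True
      show ?thesis
      proof (cases "y \<in> B1")
        case True then show ?thesis using m1 \<open>x \<in> B1\<close> by blast
      next
        case False
        then have "y \<in> B2" using y by blast
        have "?r\<^sup>*\<^sup>* x a2" using m1[OF True a(1)] e12 by (rule rtranclp.rtrancl_into_rtrancl)
        then show ?thesis using m2[OF a(2) \<open>y \<in> B2\<close>] by (rule rtranclp_trans)
      qed
    next
      case False
      then have xb: "x \<in> B2" using x by blast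
      show ?thesis
      proof (cases "y \<in> B2")
        case True then show ?thesis using m2 xb by blast
      next
        case False
        then have "y \<in> B1" using y by blast
        have "?r\<^sup>*\<^sup>* x a1" using m2[OF xb a(2)] e21 by (rule rtranclp.rtrancl_into_rtrancl)
        then show ?thesis using m1[OF a(1) \<open>y \<in> B1\<close>] by (rule rtranclp_trans)
      qed
    qed
  qed
qed

lemma lift_Inv:
  assumes "lift_step T T'" "Inv G T B"
  shows "\<exists>B'. Inv G T' B'"
proof -
  from assms(1) obtain e1 e2 u v w where
    h: "e1 \<in> edges T" "e2 \<in> edges T" "e1 \<noteq> e2" "ends T e1 = {u,v}" "ends T e2 = {v,w}" "u \<noteq> v" "v \<noteq> w"
    and T': "if u = w then T' = T\<lparr>edges := edges T - {e1,e2}\<rparr>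
             else T' = T\<lparr>edges := edges T - {e2}, ends := (ends T)(e1 := {u,w})\<rparr>"
    unfolding lift_step_def by blast
  have I1: "\<And>t. t \<in> edges T \<Longrightarrow> B t \<subseteq> edges G \<and> B t \<noteq> {} \<and> conn G (B t) \<and>
        (\<forall>a\<in>ends T t. \<exists>e\<in>B t. a \<in> ends G e)"
    and I2: "\<And>t t'. t \<in> edges T \<Longrightarrow> t' \<in> edges T \<Longrightarrow> t \<noteq> t' \<Longrightarrow> B t \<inter> B t' = {}"
    using assms(2) unfolding Inv_def by blast+
  show ?thesis
  proof (cases "u = w")
    case True
    then have "T' = T\<lparr>edges := edges T - {e1,e2}\<rparr>" using T' by simp
    then have "Inv G T' B" using assms(2) unfolding Inv_def by auto
    then show ?thesis by blast
  next
    case False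
    then have T'eq: "T' = T\<lparr>edges := edges T - {e2}, ends := (ends T)(e1 := {u,w})\<rparr>" using T' by simp
    obtain a1 where a1: "a1 \<in> B e1" "v \<in> ends G a1" using I1[OF h(1)] h(4) by blast
    obtain a2 where a2: "a2 \<in> B e2" "v \<in> ends G a2" using I1[OF h(2)] h(5) by blast
    have "a1 \<noteq> a2" using I2[OF h(1,2,3)] a1 a2 by blast
    then have cu: "conn G (B e1 \<union> B e2)"
      using conn_union[of G "B e1" "B e2" a1 a2] I1[OF h(1)] I1[OF h(2)] a1 a2 by blast
    obtain b1 where b1: "b1 \<in> B e1" "u \<in> ends G b1" using I1[OF h(1)] h(4) by blast
    obtain b2 where b2: "b2 \<in> B e2" "w \<in> ends G b2" using I1[OF h(2)] h(5) by blast
    define B' where "B' = B(e1 := B e1 \<union> B e2)"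
    have P1: "\<forall>t\<in>edges T'. B' t \<subseteq> edges G \<and> B' t \<noteq> {} \<and> conn G (B' t) \<and> (\<forall>a\<in>ends T' t. \<exists>e\<in>B' t. a \<in> ends G e)"
    proof
      fix t assume t: "t \<in> edges T'"
      show "B' t \<subseteq> edges G \<and> B' t \<noteq> {} \<and> conn G (B' t) \<and> (\<forall>a\<in>ends T' t. \<exists>e\<in>B' t. a \<in> ends G e)"
      proof (cases "t = e1")
        case True
        then show ?thesis using I1[OF h(1)] I1[OF h(2)] cu b1 b2 by (auto simp: B'_def T'eq)
      next
        case False
        then show ?thesis using I1[of t] t by (auto simp: B'_def T'eq)
      qed
    qed
    have P2: "\<forall>t\<in>edges T'. \<forall>t'\<in>edges T'. t \<noteq> t' \<longrightarrow> B' t \<inter> B' t' = {}"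
      using I2 h(1,2,3) by (auto simp: B'_def T'eq)
    have "Inv G T' B'" unfolding Inv_def using P1 P2 by blast
    then show ?thesis by blast
  qed
qed

lemma chain_Inv:
  assumes "lift_step\<^sup>*\<^sup>* S T" "Inv G S B0"
  shows "\<exists>B. Inv G T B"
  using assms(1)
proof (induction rule: rtranclp_induct)
  case base then show ?case using assms(2) by blast
next
  case (step y z) then show ?case using lift_Inv by blast
qed

lemma init_Inv:
  assumes "msubgraph S G"
  shows "Inv G S (\<lambda>t. {t})"
  using assms unfolding Inv_def msubgraph_def conn_def by auto


lemma lg_edge:
  assumes "x \<in> edges H" "y \<in> edges H"
  shows "{x,y} \<in> sedges (line_graph H) \<longleftrightarrow> x \<noteq> y \<and> ends H x \<inter> ends H y \<noteq> {}"
proof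
  assume "{x,y} \<in> sedges (line_graph H)"
  then obtain e f where "{x,y} = {e,f}" "e \<noteq> f" "ends H e \<inter> ends H f \<noteq> {}"
    unfolding line_graph_def by auto
  then show "x \<noteq> y \<and> ends H x \<inter> ends H y \<noteq> {}" by (auto simp: doubleton_eq_iff)
next
  assume "x \<noteq> y \<and> ends H x \<inter> ends H y \<noteq> {}"
  then show "{x,y} \<in> sedges (line_graph H)" using assms unfolding line_graph_def by auto
qed

lemma final:
  assumes mG: "mgraph G" and mH: "mgraph H" and I: "Inv G T B" and iso: "miso H T"
  shows "minor (line_graph H) (line_graph G)"
proof -
  from iso obtain f g where f: "bij_betw f (verts H) (verts T)" and g: "bij_betw g (edges H) (edges T)"
    and fg: "\<forall>e\<in>edges H. ends T (g e) = f ` ends H e" unfolding miso_def by blast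
  let ?E = "edges T"
  have Bsub: "\<And>t. t \<in> ?E \<Longrightarrow> B t \<subseteq> edges G"
    and Bne: "\<And>t. t \<in> ?E \<Longrightarrow> B t \<noteq> {}"
    and Bconn: "\<And>t. t \<in> ?E \<Longrightarrow> conn G (B t)"
    and Bcov: "\<And>t a. t \<in> ?E \<Longrightarrow> a \<in> ends T t \<Longrightarrow> \<exists>e\<in>B t. a \<in> ends G e"
    and Bdisj: "\<And>t t'. t \<in> ?E \<Longrightarrow> t' \<in> ?E \<Longrightarrow> t \<noteq> t' \<Longrightarrow> B t \<inter> B t' = {}"
  proof -
    have I1: "\<forall>t\<in>edges T. B t \<subseteq> edges G \<and> B t \<noteq> {} \<and> conn G (B t) \<and>
        (\<forall>a\<in>ends T t. \<exists>e\<in>B t. a \<in> ends G e)"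
      using I unfolding Inv_def by (rule conjunct1)
    have I2: "\<forall>t\<in>edges T. \<forall>t'\<in>edges T. t \<noteq> t' \<longrightarrow> B t \<inter> B t' = {}"
      using I unfolding Inv_def by (rule conjunct2)
    show "\<And>t. t \<in> ?E \<Longrightarrow> B t \<subseteq> edges G" using I1 by simp
    show "\<And>t. t \<in> ?E \<Longrightarrow> B t \<noteq> {}" using I1 by simp
    show "\<And>t. t \<in> ?E \<Longrightarrow> conn G (B t)" using I1 by simp
    show "\<And>t a. t \<in> ?E \<Longrightarrow> a \<in> ends T t \<Longrightarrow> \<exists>e\<in>B t. a \<in> ends G e" using I1 by simp
    show "\<And>t t'. t \<in> ?E \<Longrightarrow> t' \<in> ?E \<Longrightarrow> t \<noteq> t' \<Longrightarrow> B t \<inter> B t' = {}" using I2 by simp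
  qed
  define V' where "V' = (\<Union>t\<in>?E. B t)"
  define blk where "blk e = (THE t. t \<in> ?E \<and> e \<in> B t)" for e
  define rep where "rep t = (SOME x. x \<in> B t)" for t
  define \<phi> where "\<phi> e = rep (blk e)" for e
  have blk: "blk e = t" if t: "t \<in> ?E" "e \<in> B t" for e t
    unfolding blk_def
  proof (rule the_equality)
    show "t \<in> ?E \<and> e \<in> B t" using t by simp
    fix t' assume "t' \<in> ?E \<and> e \<in> B t'"
    then show "t' = t" using Bdisj[of t' t] t by auto
  qed
  have rep: "rep t \<in> B t" if "t \<in> ?E" for t
    using Bne[OF that] unfolding rep_def by (simp add: some_in_eq)
  have rep_inj: "inj_on rep ?E"
  proof (rule inj_onI)
    fix t1 t2 assume "t1 \<in> ?E" "t2 \<in> ?E" "rep t1 = rep t2"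
    then show "t1 = t2" using rep[of t1] rep[of t2] Bdisj[of t1 t2] by auto
  qed
  have blkV: "blk e \<in> ?E \<and> e \<in> B (blk e)" if ev: "e \<in> V'" for e
  proof -
    obtain t where "t \<in> ?E" "e \<in> B t" using ev unfolding V'_def by blast
    then show ?thesis using blk by simp
  qed
  have blkrep: "blk (rep t) = t" if "t \<in> ?E" for t using blk[OF that rep[OF that]] .
  define S' where "S' = \<lparr>sverts = V', sedges = {{a,b} | a b. a \<in> V' \<and> b \<in> V' \<and> a \<noteq> b \<and>
      ends G a \<inter> ends G b \<noteq> {} \<and> (blk a = blk b \<or> ends T (blk a) \<inter> ends T (blk b) \<noteq> {})}\<rparr>"
  have S'e: "\<exists>a b. p = {a,b} \<and> a \<in> V' \<and> b \<in> V' \<and> a \<noteq> b \<and>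
      ends G a \<inter> ends G b \<noteq> {} \<and> (blk a = blk b \<or> ends T (blk a) \<inter> ends T (blk b) \<noteq> {})"
    if "p \<in> sedges S'" for p
    using that unfolding S'_def sgraph.select_convs mem_Collect_eq .
  have S'i: "{a,b} \<in> sedges S'" if "a \<in> V'" "b \<in> V'" "a \<noteq> b"
      "ends G a \<inter> ends G b \<noteq> {}" "blk a = blk b \<or> ends T (blk a) \<inter> ends T (blk b) \<noteq> {}" for a b
    unfolding S'_def sgraph.select_convs mem_Collect_eq using that by blast
  have V'sub: "V' \<subseteq> edges G" using Bsub unfolding V'_def by blast
  have sub: "ssubgraph S' (line_graph G)"
    unfolding ssubgraph_def
  proof (intro conjI)
    show "sverts S' \<subseteq> sverts (line_graph G)" using V'sub by (simp add: S'_def line_graph_def)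
    show "sedges S' \<subseteq> sedges (line_graph G)"
    proof
      fix p assume "p \<in> sedges S'"
      then obtain a b where "p = {a,b}" "a \<in> V'" "b \<in> V'" "a \<noteq> b" "ends G a \<inter> ends G b \<noteq> {}"
        using S'e by blast
      then show "p \<in> sedges (line_graph G)" using V'sub unfolding line_graph_def sgraph.select_convs mem_Collect_eq by blast
    qed
    show "\<forall>e\<in>sedges S'. e \<subseteq> sverts S'"
    proof
      fix p assume "p \<in> sedges S'"
      then obtain a b where "p = {a,b}" "a \<in> V'" "b \<in> V'" using S'e by blast
      then show "p \<subseteq> sverts S'" by (simp add: S'_def)
    qed
  qed
  have contr: "contract_step\<^sup>*\<^sup>* S' (quot \<phi> S')"
  proof (rule model_contract_aux[OF refl])
    have "finite (edges G)" using mG unfolding mgraph_def by blast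
    then show "finite (sverts S')" using V'sub finite_subset by (simp add: S'_def)
    show "\<forall>e\<in>sedges S'. e \<subseteq> sverts S' \<and> card e = 2"
    proof
      fix p assume "p \<in> sedges S'"
      then obtain a b where "p = {a,b}" "a \<in> V'" "b \<in> V'" "a \<noteq> b" using S'e by blast
      then show "p \<subseteq> sverts S' \<and> card p = 2" by (simp add: S'_def)
    qed
    show "\<forall>x\<in>sverts S'. \<phi> x \<in> sverts S' \<and> \<phi> (\<phi> x) = \<phi> x"
    proof
      fix x assume "x \<in> sverts S'"
      then have bx: "blk x \<in> ?E" using blkV by (simp add: S'_def)
      have "rep (blk x) \<in> V'" using rep[OF bx] bx unfolding V'_def by blast
      then show "\<phi> x \<in> sverts S' \<and> \<phi> (\<phi> x) = \<phi> x"
        using blkrep[OF bx] unfolding \<phi>_def by (simp add: S'_def)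
    qed
    show "\<forall>x\<in>sverts S'. (\<lambda>a b. {a,b} \<in> sedges S' \<and> \<phi> a = \<phi> b)\<^sup>*\<^sup>* x (\<phi> x)"
    proof
      fix x assume "x \<in> sverts S'"
      then have x: "blk x \<in> ?E" "x \<in> B (blk x)" using blkV by (auto simp: S'_def)
      let ?t = "blk x"
      have "(ladj G (B ?t))\<^sup>*\<^sup>* x (rep ?t)" using Bconn[OF x(1)] x rep unfolding conn_def by blast
      then have "(\<lambda>a b. {a,b} \<in> sedges S' \<and> \<phi> a = \<phi> b)\<^sup>*\<^sup>* x (rep ?t)"
      proof (induction rule: rtranclp_induct)
        case base then show ?case by simp
      next
        case (step y z)
        then have yz: "y \<in> B ?t" "z \<in> B ?t" "y \<noteq> z" "ends G y \<inter> ends G z \<noteq> {}"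
          by (auto simp: ladj_def)
        have bb: "blk y = ?t" "blk z = ?t" using blk x(1) yz by auto
        have "y \<in> V'" "z \<in> V'" using yz x(1) unfolding V'_def by auto
        then have "{y,z} \<in> sedges S'" using yz bb by (intro S'i) auto
        moreover have "\<phi> y = \<phi> z" using bb unfolding \<phi>_def by simp
        ultimately show ?case using step.IH by (simp add: rtranclp.rtrancl_into_rtrancl)
      qed
      then show "(\<lambda>a b. {a,b} \<in> sedges S' \<and> \<phi> a = \<phi> b)\<^sup>*\<^sup>* x (\<phi> x)" by (simp add: \<phi>_def)
    qed
  qed
  have qedge: "{rep t1, rep t2} \<in> sedges (quot \<phi> S') \<longleftrightarrow> t1 \<noteq> t2 \<and> ends T t1 \<inter> ends T t2 \<noteq> {}"
    if t: "t1 \<in> ?E" "t2 \<in> ?E" for t1 t2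
  proof
    assume "{rep t1, rep t2} \<in> sedges (quot \<phi> S')"
    then have "\<exists>p\<in>sedges S'. {rep t1, rep t2} = \<phi> ` p \<and> card {rep t1, rep t2} = 2"
      unfolding quot_def sgraph.select_convs mem_Collect_eq .
    then obtain p where p: "p \<in> sedges S'" "{rep t1, rep t2} = \<phi> ` p" "card {rep t1, rep t2} = 2"
      by blast
    obtain a b where ab: "p = {a,b}" "a \<in> V'" "b \<in> V'"
       "blk a = blk b \<or> ends T (blk a) \<inter> ends T (blk b) \<noteq> {}"
      using S'e[OF p(1)] by blast
    have ne: "rep t1 \<noteq> rep t2" using p(3) by (cases "rep t1 = rep t2") auto
    then have "t1 \<noteq> t2" by blast
    have eq: "{rep t1, rep t2} = {rep (blk a), rep (blk b)}" using p(2) ab(1) unfolding \<phi>_def by simp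
    have ba: "blk a \<in> ?E" "blk b \<in> ?E" using blkV ab(2,3) by blast+
    have "rep (blk a) \<noteq> rep (blk b)" using eq ne by auto
    then have nab: "blk a \<noteq> blk b" by metis
    then have eab: "ends T (blk a) \<inter> ends T (blk b) \<noteq> {}" using ab(4) by blast
    from eq have "(rep t1 = rep (blk a) \<and> rep t2 = rep (blk b)) \<or> (rep t1 = rep (blk b) \<and> rep t2 = rep (blk a))"
      unfolding doubleton_eq_iff by blast
    then have "(t1 = blk a \<and> t2 = blk b) \<or> (t1 = blk b \<and> t2 = blk a)"
      using inj_onD[OF rep_inj] t ba by metis
    then have "ends T t1 \<inter> ends T t2 \<noteq> {}" using eab by (metis Int_commute)
    then show "t1 \<noteq> t2 \<and> ends T t1 \<inter> ends T t2 \<noteq> {}" using \<open>t1 \<noteq> t2\<close> by blast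
  next
    assume h: "t1 \<noteq> t2 \<and> ends T t1 \<inter> ends T t2 \<noteq> {}"
    then obtain c where c: "c \<in> ends T t1" "c \<in> ends T t2" by blast
    obtain a where a: "a \<in> B t1" "c \<in> ends G a" using Bcov[OF t(1) c(1)] by blast
    obtain b where b: "b \<in> B t2" "c \<in> ends G b" using Bcov[OF t(2) c(2)] by blast
    have "B t1 \<inter> B t2 = {}" using Bdisj[OF t] h by blast
    then have ab: "a \<noteq> b" using a(1) b(1) by blast
    have ba: "blk a = t1" "blk b = t2" using blk[OF t(1) a(1)] blk[OF t(2) b(1)] .
    have V: "a \<in> V'" "b \<in> V'" using a(1) b(1) t unfolding V'_def by blast+
    have en: "ends G a \<inter> ends G b \<noteq> {}" using a(2) b(2) by blast
    have S: "{a,b} \<in> sedges S'" using S'i[OF V ab en] h ba by blast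
    have im: "\<phi> ` {a,b} = {rep t1, rep t2}" using ba by (simp add: \<phi>_def)
    have "rep t1 \<noteq> rep t2" using inj_onD[OF rep_inj _ t] h by blast
    then have cd: "card {rep t1, rep t2} = 2" by simp
    have "\<exists>e\<in>sedges S'. {rep t1, rep t2} = \<phi> ` e \<and> card {rep t1, rep t2} = 2"
      using S im cd by blast
    then show "{rep t1, rep t2} \<in> sedges (quot \<phi> S')"
      unfolding quot_def sgraph.select_convs mem_Collect_eq .
  qed
  have qverts: "sverts (quot \<phi> S') = rep ` ?E"
  proof -
    have "\<phi> ` V' = rep ` ?E"
    proof
      show "\<phi> ` V' \<subseteq> rep ` ?E" using blkV unfolding \<phi>_def by auto
      show "rep ` ?E \<subseteq> \<phi> ` V'"
      proof
        fix r assume "r \<in> rep ` ?E"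
        then obtain t where "t \<in> ?E" "r = rep t" by blast
        then show "r \<in> \<phi> ` V'" using rep blkrep unfolding \<phi>_def V'_def by (metis UN_I image_eqI)
      qed
    qed
    then show ?thesis unfolding quot_def S'_def by simp
  qed
  have "siso (line_graph H) (quot \<phi> S')"
    unfolding siso_def
  proof (intro exI[of _ "rep \<circ> g"] conjI ballI)
    have "bij_betw (rep \<circ> g) (edges H) (rep ` ?E)"
      using bij_betw_trans[OF g inj_on_imp_bij_betw[OF rep_inj]] .
    then show "bij_betw (rep \<circ> g) (sverts (line_graph H)) (sverts (quot \<phi> S'))"
      using qverts by (simp add: line_graph_def)
  next
    fix x y assume "x \<in> sverts (line_graph H)" "y \<in> sverts (line_graph H)"
    then have xy: "x \<in> edges H" "y \<in> edges H" by (auto simp: line_graph_def)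
    have gx: "g x \<in> ?E" "g y \<in> ?E" using g xy bij_betwE by blast+
    have gne: "g x \<noteq> g y \<longleftrightarrow> x \<noteq> y" using g xy by (metis bij_betw_iff_bijections)
    have sx: "ends H x \<subseteq> verts H" "ends H y \<subseteq> verts H" using mH xy unfolding mgraph_def by auto
    have "ends T (g x) \<inter> ends T (g y) = f ` (ends H x \<inter> ends H y)"
      using fg xy inj_on_image_Int[OF bij_betw_imp_inj_on[OF f] sx] by simp
    then have "ends T (g x) \<inter> ends T (g y) \<noteq> {} \<longleftrightarrow> ends H x \<inter> ends H y \<noteq> {}" by simp
    then show "{x, y} \<in> sedges (line_graph H) \<longleftrightarrow> {(rep \<circ> g) x, (rep \<circ> g) y} \<in> sedges (quot \<phi> S')"
      using lg_edge[OF xy] qedge[OF gx] gne by simp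
  qed
  then show ?thesis unfolding minor_def using sub contr by blast
qed

theorem proposition9p1:
  fixes G :: "('v, 'e) mgraph" and H :: "('w, 'f) mgraph"
  assumes "mgraph G" and "mgraph H"
    and "mconnected G" and "mconnected H"
    and "immersion H G"
  shows "minor (line_graph H) (line_graph G)"
proof -
  from assms(5) obtain S T where S: "msubgraph S G" and L: "lift_step\<^sup>*\<^sup>* S T" and iso: "miso H T"
    unfolding immersion_def by blast
  obtain B where "Inv G T B" using chain_Inv[OF L init_Inv[OF S]] by blast
  then show ?thesis using final assms(1,2) iso by blast
qed

end
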